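(* Let $(M,J)$ be an almost complex manifold and $\nabla$ a connection on $M$. Then: (1) in local coordinates $(x_1,\dots,x_n,p_1,\dots,p_n)$ on $T^*M$, with respect to the basis $(\partial_{x},\partial_p)$, $J^{G,\nabla}$ has block matrix with upper-left block $(J^i_j)$, upper-right block $0$, lower-left block with entries $\Gamma_{l,i}J^l_j-\Gamma_{j,l}J^l_i$, and lower-right block $(J^j_i)$ (i.e. the transpose of $J$); (2) $J^{G,\nabla}=J^c+\gamma(S)$, where $S(X,Y)=-(\nabla J)(X,Y)+(\nabla J)(Y,X)+T(JX,Y)-JT(X,Y)$ and $T$ is the torsion of $\nabla$.
   Context: $J=J^k_ldx^l\otimes\partial_{x_k}$ with $J^2=-\mathrm{Id}$; Einstein summation. Christoffel symbols: $\nabla_{\partial_{x_i}}\partial_{x_j}=\Gamma^k_{i,j}\partial_{x_k}$, and $\Gamma_{i,j}:=p_k\Gamma^k_{i,j}$. Torsion $T(X,Y)=\nabla_XY-\nabla_YX-[X,Y]$; $(\nabla J)(X,Y)=\nabla_X(JY)-J\nabla_XY$. The induced connection on $T^*M$ is $(\nabla_Xs)(Y)=X(s(Y))-s(\nabla_XY)$; $H^\nabla_\xi=\{d_xs(X): X\in T_xM,\ s(x)=\xi,\ \nabla_Xs=0\}$, $T_\xi T^*M=H^\nabla_\xi\oplus T^*_xM$, $v^\nabla$ the projection onto $T^*_xM$ along $H^\nabla_\xi$. The generalized horizontal lift is $J^{G,\nabla}(X,v^\nabla(Y))=(JX,{}^tJ(v^\nabla(Y)))$ with $JX:=(d_\xi\pi|_{H^\nabla_\xi})^{-1}(J(x)d_\xi\pi(X))$.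 For $R=R^k_{ij}dx^i\otimes dx^j\otimes\partial_{x_k}$, $\gamma(R):=p_kR^k_{ij}dx^i\otimes\partial_{p_j}$. The complete lift $J^c$ is defined by $d(\theta(J))=\omega_{st}(J^c\cdot,\cdot)$ with $\theta(J)=p_kJ^k_ldx^l$, $\omega_{st}=d(p_idx^i)$; locally its block matrix has upper-left $J^i_j$, upper-right $0$, lower-left $p_k(\partial_{x_j}J^k_i-\partial_{x_i}J^k_j)$, lower-right $J^j_i$. *)

theory Defs
  imports "HOL-Analysis.Analysis"
begin

text \<open>Everything is expressed in one coordinate chart: points of M are x :: real^'n
 (chart domain an open set U), covectors are p :: real^'n (components p_k), and a
 tangent vector of T*M at (x,p) is a pair (a, alpha) :: real^'n * real^'n of
 components w.r.t. the basis (d/dx, d/dp).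
 Conventions: J x $ k $ l = J^k_l(x);  Gam x k i j = Gamma^k_{i,j}(x).\<close>

type_synonym 'n almost_cx = "real^'n \<Rightarrow> real^'n^'n"
type_synonym 'n christoffel = "real^'n \<Rightarrow> 'n \<Rightarrow> 'n \<Rightarrow> 'n \<Rightarrow> real"

definition e :: "'n::finite \<Rightarrow> real^'n" where
  "e i = axis i 1"

definition chr :: "'n::finite christoffel \<Rightarrow> real^'n \<Rightarrow> real^'n \<Rightarrow> real^'n \<Rightarrow> real^'n" where
  "chr Gam x u v = (\<chi> k. \<Sum>i\<in>UNIV. \<Sum>j\<in>UNIV. Gam x k i j * u $ i * v $ j)"

definition cov :: "'n::finite christoffel \<Rightarrow> (real^'n \<Rightarrow> real^'n) \<Rightarrow> real^'n \<Rightarrow> real^'n \<Rightarrow> real^'n" where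
  "cov Gam Y x u = frechet_derivative Y (at x) u + chr Gam x u (Y x)"

text \<open>Induced covariant derivative of a 1-form (section of T*M) s along u at x:
  (nabla_u s)(d/dx_j) = u(s_j) - s(nabla_u d/dx_j).\<close>
definition cov_co :: "'n::finite christoffel \<Rightarrow> (real^'n \<Rightarrow> real^'n) \<Rightarrow> real^'n \<Rightarrow> real^'n \<Rightarrow> real^'n" where
  "cov_co Gam s x u = (\<chi> j. frechet_derivative s (at x) u $ j
        - (\<Sum>k\<in>UNIV. s x $ k * chr Gam x u (e j) $ k))"

definition horiz :: "'n::finite christoffel \<Rightarrow> real^'n \<Rightarrow> real^'n \<Rightarrow> ((real^'n) \<times> (real^'n)) set" where
  "horiz Gam x p = {(u, frechet_derivative s (at x) u) | u s.
       s differentiable (at x) \<and> s x = p \<and> cov_co Gam s x u = 0}"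

definition Jhor :: "'n::finite christoffel \<Rightarrow> 'n almost_cx \<Rightarrow> real^'n \<Rightarrow> real^'n
     \<Rightarrow> (real^'n) \<times> (real^'n) \<Rightarrow> (real^'n) \<times> (real^'n)" where
  "Jhor Gam J x p X = (THE Y. Y \<in> horiz Gam x p \<and> fst Y = J x *v fst X)"

definition JG :: "'n::finite christoffel \<Rightarrow> 'n almost_cx \<Rightarrow> real^'n \<Rightarrow> real^'n
     \<Rightarrow> (real^'n) \<times> (real^'n) \<Rightarrow> (real^'n) \<times> (real^'n)" where
  "JG Gam J x p Z = (THE W. \<exists>X V. X \<in> horiz Gam x p \<and> fst V = 0 \<and> Z = X + V \<and>
       W = Jhor Gam J x p X + (0, transpose (J x) *v snd V))"

text \<open>d(theta(J)) at (x,p), theta(J) = p_k J^k_l dx^l, with (a wedge b)(A,B) = a(A)b(B) - a(B)b(A).\<close>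
definition dtheta :: "'n::finite almost_cx \<Rightarrow> real^'n \<Rightarrow> real^'n
     \<Rightarrow> (real^'n) \<times> (real^'n) \<Rightarrow> (real^'n) \<times> (real^'n) \<Rightarrow> real" where
  "dtheta J x p A B =
     (let df = (\<lambda>l (a::real^'n, \<alpha>::real^'n).
          (\<Sum>k\<in>UNIV. p $ k * frechet_derivative J (at x) a $ k $ l)
          + (\<Sum>k\<in>UNIV. \<alpha> $ k * J x $ k $ l))
      in \<Sum>l\<in>UNIV. df l A * fst B $ l - df l B * fst A $ l)"

text \<open>omega_st = d(p_i dx^i) = dp_i wedge dx^i.\<close>
definition omega_st :: "(real^'n::finite) \<times> (real^'n) \<Rightarrow> (real^'n) \<times> (real^'n) \<Rightarrow> real" where
  "omega_st A B = (\<Sum>i\<in>UNIV. snd A $ i * fst B $ i - snd B $ i * fst A $ i)"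

definition Jc :: "'n::finite almost_cx \<Rightarrow> real^'n \<Rightarrow> real^'n
     \<Rightarrow> (real^'n) \<times> (real^'n) \<Rightarrow> (real^'n) \<times> (real^'n)" where
  "Jc J x p A = (THE C. \<forall>B. dtheta J x p A B = omega_st C B)"

definition torsion_field :: "'n::finite christoffel \<Rightarrow> (real^'n \<Rightarrow> real^'n)
     \<Rightarrow> (real^'n \<Rightarrow> real^'n) \<Rightarrow> real^'n \<Rightarrow> real^'n" where
  "torsion_field Gam X Y x = cov Gam Y x (X x) - cov Gam X x (Y x)
      - (frechet_derivative Y (at x) (X x) - frechet_derivative X (at x) (Y x))"

definition nablaJ_field :: "'n::finite christoffel \<Rightarrow> 'n almost_cx \<Rightarrow> (real^'n \<Rightarrow> real^'n)
     \<Rightarrow> (real^'n \<Rightarrow> real^'n) \<Rightarrow> real^'n \<Rightarrow> real^'n" where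
  "nablaJ_field Gam J X Y x = cov Gam (\<lambda>y. J y *v Y y) x (X x) - J x *v cov Gam Y x (X x)"

definition S_tensor :: "'n::finite christoffel \<Rightarrow> 'n almost_cx \<Rightarrow> real^'n
     \<Rightarrow> real^'n \<Rightarrow> real^'n \<Rightarrow> real^'n" where
  "S_tensor Gam J x u v =
     - nablaJ_field Gam J (\<lambda>_. u) (\<lambda>_. v) x + nablaJ_field Gam J (\<lambda>_. v) (\<lambda>_. u) x
     + torsion_field Gam (\<lambda>y. J y *v u) (\<lambda>_. v) x
     - J x *v torsion_field Gam (\<lambda>_. u) (\<lambda>_. v) x"

definition gamma_op :: "(real^'n::finite \<Rightarrow> real^'n \<Rightarrow> real^'n) \<Rightarrow> real^'n \<Rightarrow> (real^'n) \<times> (real^'n) \<Rightarrow> (real^'n) \<times> (real^'n)" where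
  "gamma_op R p A = (0, \<chi> j. \<Sum>i\<in>UNIV. \<Sum>k\<in>UNIV. p $ k * (R (e i) (e j)) $ k * fst A $ i)"

definition Gp :: "'n::finite christoffel \<Rightarrow> real^'n \<Rightarrow> real^'n \<Rightarrow> 'n \<Rightarrow> 'n \<Rightarrow> real" where
  "Gp Gam x p i j = (\<Sum>k\<in>UNIV. p $ k * Gam x k i j)"

end

theory Submission
  imports Defs
begin

definition Gv :: "'n::finite christoffel \<Rightarrow> real^'n \<Rightarrow> real^'n \<Rightarrow> real^'n \<Rightarrow> real^'n" where
  "Gv Gam x p u = (\<chi> j. \<Sum>i\<in>UNIV. u $ i * Gp Gam x p i j)"

lemma chr_e: "(\<Sum>k\<in>UNIV. p $ k * chr Gam x u (e j) $ k) = Gv Gam x p u $ j"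
proof -
  have "(\<Sum>k\<in>UNIV. p $ k * chr Gam x u (e j) $ k) = (\<Sum>k\<in>UNIV. \<Sum>i\<in>UNIV. p $ k * Gam x k i j * u $ i)"
    by (simp add: chr_def e_def axis_def if_distrib sum_distrib_left mult.assoc cong: if_cong)
  also have "\<dots> = (\<Sum>i\<in>UNIV. \<Sum>k\<in>UNIV. p $ k * Gam x k i j * u $ i)" by (rule sum.swap)
  also have "\<dots> = Gv Gam x p u $ j"
    by (simp add: Gv_def Gp_def sum_distrib_left sum_distrib_right mult.commute mult.left_commute)
  finally show ?thesis .
qed

lemma linear_Gv: "linear (Gv Gam x p)"
  by (rule linearI) (simp_all add: Gv_def vec_eq_iff algebra_simps sum.distrib sum_distrib_left)

lemma cov_co_zero: "cov_co Gam s x u = 0 \<longleftrightarrow> frechet_derivative s (at x) u = Gv Gam (x::real^'n::finite) (s x) u"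
  by (simp add: cov_co_def vec_eq_iff chr_e)

lemma horiz_char: "(u, \<beta>) \<in> horiz Gam x p \<longleftrightarrow> \<beta> = Gv Gam x p u"
proof
  assume "(u, \<beta>) \<in> horiz Gam x p"
  then show "\<beta> = Gv Gam x p u" by (auto simp: horiz_def cov_co_zero)
next
  assume b: "\<beta> = Gv Gam x p u"
  define s where "s = (\<lambda>y. p + Gv Gam x p (y - x))"
  have lin: "bounded_linear (Gv Gam x p)" using linear_Gv linear_conv_bounded_linear by blast
  have d: "(s has_derivative Gv Gam x p) (at x)"
    unfolding s_def
    by (auto intro!: derivative_eq_intros bounded_linear.has_derivative[OF lin] simp: lin)
  have fd: "frechet_derivative s (at x) = Gv Gam x p" using frechet_derivative_at[OF d] by simp
  have "s differentiable (at x)" using d by (auto simp: differentiable_def)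
  moreover have "s x = p" by (simp add: s_def linear_0[OF linear_Gv])
  ultimately show "(u, \<beta>) \<in> horiz Gam x p" unfolding horiz_def
    using b fd cov_co_zero[of Gam s x u] by force
qed


lemma Jhor_eq: "Jhor Gam J x p X = (J x *v fst X, Gv Gam x p (J x *v fst X))"
  unfolding Jhor_def
  by (rule the_equality) (auto simp: horiz_char)

lemma JG_eq: "JG Gam J x p (a, \<alpha>) =
   (J x *v a, Gv Gam x p (J x *v a) + transpose (J x) *v (\<alpha> - Gv Gam x p a))"
  unfolding JG_def
proof (rule the_equality)
  show "\<exists>X V. X \<in> horiz Gam x p \<and> fst V = 0 \<and> (a, \<alpha>) = X + V \<and>
     (J x *v a, Gv Gam x p (J x *v a) + transpose (J x) *v (\<alpha> - Gv Gam x p a)) =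
     Jhor Gam J x p X + (0, transpose (J x) *v snd V)"
    by (rule exI[of _ "(a, Gv Gam x p a)"], rule exI[of _ "(0, \<alpha> - Gv Gam x p a)"])
       (simp add: horiz_char Jhor_eq)
next
  fix W assume "\<exists>X V. X \<in> horiz Gam x p \<and> fst V = 0 \<and> (a, \<alpha>) = X + V \<and>
     W = Jhor Gam J x p X + (0, transpose (J x) *v snd V)"
  then obtain u \<beta> v \<gamma> where h: "(u,\<beta>) \<in> horiz Gam x p" "v = 0" "(a, \<alpha>) = (u,\<beta>) + (v,\<gamma>)"
     "W = Jhor Gam J x p (u,\<beta>) + (0, transpose (J x) *v \<gamma>)" by auto
  then have "u = a" "\<beta> = Gv Gam x p a" "\<gamma> = \<alpha> - Gv Gam x p a" by (auto simp: horiz_char)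
  then show "W = (J x *v a, Gv Gam x p (J x *v a) + transpose (J x) *v (\<alpha> - Gv Gam x p a))"
    using h by (simp add: Jhor_eq)
qed

lemma part1: "JG Gam J x p (a, \<alpha>) =
            (J x *v a,
             (\<chi> i. \<Sum>j\<in>UNIV. (\<Sum>l\<in>UNIV. Gp Gam x p l i * J x $ l $ j - Gp Gam x p j l * J x $ l $ i) * a $ j)
             + transpose (J x) *v \<alpha>)"
proof -
  have "Gv Gam x p (J x *v a) + transpose (J x) *v (\<alpha> - Gv Gam x p a) =
     (\<chi> i. \<Sum>j\<in>UNIV. (\<Sum>l\<in>UNIV. Gp Gam x p l i * J x $ l $ j - Gp Gam x p j l * J x $ l $ i) * a $ j)
             + transpose (J x) *v \<alpha>"
  proof -
    have 1: "Gv Gam x p (J x *v a) $ i = (\<Sum>j\<in>UNIV. (\<Sum>l\<in>UNIV. Gp Gam x p l i * J x $ l $ j) * a $ j)" for i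
    proof -
      have "Gv Gam x p (J x *v a) $ i = (\<Sum>l\<in>UNIV. \<Sum>j\<in>UNIV. Gp Gam x p l i * J x $ l $ j * a $ j)"
        by (simp add: Gv_def matrix_vector_mult_def sum_distrib_left sum_distrib_right mult_ac)
      also have "\<dots> = (\<Sum>j\<in>UNIV. \<Sum>l\<in>UNIV. Gp Gam x p l i * J x $ l $ j * a $ j)" by (rule sum.swap)
      finally show ?thesis by (simp add: sum_distrib_right)
    qed
    have 2: "(transpose (J x) *v Gv Gam x p a) $ i = (\<Sum>j\<in>UNIV. (\<Sum>l\<in>UNIV. Gp Gam x p j l * J x $ l $ i) * a $ j)" for i
    proof -
      have "(transpose (J x) *v Gv Gam x p a) $ i = (\<Sum>l\<in>UNIV. \<Sum>j\<in>UNIV. Gp Gam x p j l * J x $ l $ i * a $ j)"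
        by (simp add: Gv_def matrix_vector_mult_def transpose_def sum_distrib_left sum_distrib_right mult_ac)
      also have "\<dots> = (\<Sum>j\<in>UNIV. \<Sum>l\<in>UNIV. Gp Gam x p j l * J x $ l $ i * a $ j)" by (rule sum.swap)
      finally show ?thesis by (simp add: sum_distrib_right)
    qed
    show ?thesis
      by (simp add: vec_eq_iff matrix_vector_mult_diff_distrib 1 2[simplified] left_diff_distrib sum_subtractf)
  qed
  then show ?thesis by (simp add: JG_eq)
qed


lemma omega_e1: "omega_st C (e i, 0) = snd C $ i"
  by (simp add: omega_st_def e_def axis_def mult_delta_right mult_delta_left)

lemma omega_e2: "omega_st C (0, e i) = - fst C $ i"
  by (simp add: omega_st_def e_def axis_def mult_delta_right mult_delta_left sum_negf)

lemma omega_unique: assumes "\<forall>B. omega_st C B = omega_st C' B" shows "C = C'"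
proof -
  have "snd C = snd C'" "fst C = fst C'"
    using assms omega_e1 omega_e2 by (metis neg_equal_iff_equal vec_eq_iff)+
  then show ?thesis by (simp add: prod_eq_iff)
qed

lemma D_expand: assumes "linear D" shows "(D a :: real^'n^'n) $ k $ l = (\<Sum>i\<in>UNIV. a $ i * D (e i) $ k $ l)"
proof -
  have "D a = D (\<Sum>i\<in>UNIV. a $ i *\<^sub>R e i)"
    using basis_expansion[of a] by (simp add: e_def scalar_mult_eq_scaleR)
  also have "\<dots> = (\<Sum>i\<in>UNIV. a $ i *\<^sub>R D (e i))"
    by (simp add: linear_sum[OF assms] linear_scale[OF assms])
  finally show ?thesis by simp
qed

definition Jcv :: "'n::finite almost_cx \<Rightarrow> real^'n \<Rightarrow> real^'n
     \<Rightarrow> (real^'n) \<times> (real^'n) \<Rightarrow> (real^'n) \<times> (real^'n)" where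
  "Jcv J x p A = (J x *v fst A, \<chi> i. (\<Sum>k\<in>UNIV. p $ k * frechet_derivative J (at x) (fst A) $ k $ i)
      + (transpose (J x) *v snd A) $ i
      - (\<Sum>l\<in>UNIV. \<Sum>k\<in>UNIV. p $ k * frechet_derivative J (at x) (e i) $ k $ l * fst A $ l))"

lemma dtheta_eq: assumes lin: "linear (frechet_derivative J (at x))"
  shows "dtheta J x p A B = omega_st (Jcv J x p A) B"
proof -
  obtain a \<alpha> b \<beta> where AB: "A = (a, \<alpha>)" "B = (b, \<beta>)" by fastforce
  define D where "D = frechet_derivative J (at x)"
  have lD: "linear D" using lin D_def by simp
  define dfA where "dfA l = (\<Sum>k\<in>UNIV. p $ k * D a $ k $ l) + (\<Sum>k\<in>UNIV. \<alpha> $ k * J x $ k $ l)" for l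
  have t1: "(\<Sum>l\<in>UNIV. (\<Sum>k\<in>UNIV. p $ k * D b $ k $ l) * a $ l)
     = (\<Sum>i\<in>UNIV. (\<Sum>l\<in>UNIV. \<Sum>k\<in>UNIV. p $ k * D (e i) $ k $ l * a $ l) * b $ i)"
  proof -
    have "(\<Sum>l\<in>UNIV. (\<Sum>k\<in>UNIV. p $ k * D b $ k $ l) * a $ l)
       = (\<Sum>l\<in>UNIV. \<Sum>k\<in>UNIV. \<Sum>i\<in>UNIV. p $ k * D (e i) $ k $ l * a $ l * b $ i)"
      by (simp add: D_expand[OF lD, of b] sum_distrib_left sum_distrib_right mult_ac)
    also have "\<dots> = (\<Sum>l\<in>UNIV. \<Sum>i\<in>UNIV. \<Sum>k\<in>UNIV. p $ k * D (e i) $ k $ l * a $ l * b $ i)"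
      by (rule sum.cong[OF refl], rule sum.swap)
    also have "\<dots> = (\<Sum>i\<in>UNIV. \<Sum>l\<in>UNIV. \<Sum>k\<in>UNIV. p $ k * D (e i) $ k $ l * a $ l * b $ i)"
      by (rule sum.swap)
    finally show ?thesis by (simp add: sum_distrib_right)
  qed
  have t2: "(\<Sum>l\<in>UNIV. (\<Sum>k\<in>UNIV. \<beta> $ k * J x $ k $ l) * a $ l) = (\<Sum>i\<in>UNIV. \<beta> $ i * (J x *v a) $ i)"
  proof -
    have "(\<Sum>l\<in>UNIV. (\<Sum>k\<in>UNIV. \<beta> $ k * J x $ k $ l) * a $ l) = (\<Sum>l\<in>UNIV. \<Sum>k\<in>UNIV. \<beta> $ k * J x $ k $ l * a $ l)"
      by (simp add: sum_distrib_right)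
    also have "\<dots> = (\<Sum>k\<in>UNIV. \<Sum>l\<in>UNIV. \<beta> $ k * J x $ k $ l * a $ l)" by (rule sum.swap)
    finally show ?thesis by (simp add: matrix_vector_mult_def sum_distrib_left mult_ac)
  qed
  have t3: "dfA i = (\<Sum>k\<in>UNIV. p $ k * D a $ k $ i) + (transpose (J x) *v \<alpha>) $ i" for i
    by (simp add: dfA_def matrix_vector_mult_def transpose_def mult_ac)
  have "dtheta J x p A B = (\<Sum>l\<in>UNIV. dfA l * b $ l) - (\<Sum>l\<in>UNIV. (\<Sum>k\<in>UNIV. p $ k * D b $ k $ l) * a $ l)
       - (\<Sum>l\<in>UNIV. (\<Sum>k\<in>UNIV. \<beta> $ k * J x $ k $ l) * a $ l)"
    by (simp add: dtheta_def AB D_def dfA_def sum_subtractf distrib_right sum.distrib)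
  also have "\<dots> = omega_st (Jcv J x p A) B"
    unfolding t1 t2 
    by (simp add: omega_st_def Jcv_def AB D_def[symmetric] t3 sum_subtractf left_diff_distrib distrib_right sum.distrib sum_distrib_right)
  finally show ?thesis .
qed

lemma Jc_eq: assumes "linear (frechet_derivative J (at x))" shows "Jc J x p A = Jcv J x p A"
  unfolding Jc_def
  by (rule the_equality) (auto simp: dtheta_eq[OF assms] intro: omega_unique)


lemma bl_mv: "bounded_linear (\<lambda>M::real^'n::finite^'m::finite. M *v v)"
proof -
  have "linear (\<lambda>M::real^'n^'m. M *v v)"
    by (rule linearI) (simp_all add: matrix_vector_mult_def vec_eq_iff algebra_simps sum.distrib sum_distrib_left)
  then show ?thesis using linear_conv_bounded_linear by blast
qed

lemma fd_Jv: fixes J :: "'n::finite almost_cx" assumes "J differentiable (at x)"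
  shows "frechet_derivative (\<lambda>y. J y *v v) (at x) = (\<lambda>h. frechet_derivative J (at x) h *v v)"
proof -
  have "(J has_derivative frechet_derivative J (at x)) (at x)" using assms frechet_derivative_works by blast
  then have "((\<lambda>y. J y *v v) has_derivative (\<lambda>h. frechet_derivative J (at x) h *v v)) (at x)"
    using bounded_linear.has_derivative[OF bl_mv[of v]] by blast
  then show ?thesis using frechet_derivative_at by metis
qed

lemma S_eq: fixes J :: "'n::finite almost_cx" assumes "J differentiable (at x)"
  shows "S_tensor Gam J x u v = frechet_derivative J (at x) v *v u - frechet_derivative J (at x) u *v v
     + chr Gam x (J x *v u) v - chr Gam x u (J x *v v)"
  by (simp add: S_tensor_def nablaJ_field_def torsion_field_def cov_def fd_Jv[OF assms]
       matrix_vector_mult_diff_distrib)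


lemma chr_alt: "chr Gam x u w $ k = (\<Sum>i\<in>UNIV. u $ i * (\<Sum>l\<in>UNIV. Gam x k i l * w $ l))"
  by (simp add: chr_def sum_distrib_left mult_ac)

lemma chr_e2: "(\<Sum>k\<in>UNIV. p $ k * chr Gam x (e i) w $ k) = (\<Sum>l\<in>UNIV. Gp Gam x p i l * w $ l)"
proof -
  have "(\<Sum>k\<in>UNIV. p $ k * chr Gam x (e i) w $ k) = (\<Sum>k\<in>UNIV. \<Sum>l\<in>UNIV. p $ k * Gam x k i l * w $ l)"
  proof -
    have "chr Gam x (e i) w $ k = (\<Sum>l\<in>UNIV. Gam x k i l * w $ l)" for k
      unfolding chr_alt by (simp add: e_def axis_def mult_delta_left)
    then show ?thesis by (simp add: sum_distrib_left mult.assoc)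
  qed
  also have "\<dots> = (\<Sum>l\<in>UNIV. \<Sum>k\<in>UNIV. p $ k * Gam x k i l * w $ l)" by (rule sum.swap)
  finally show ?thesis by (simp add: Gp_def sum_distrib_right)
qed

lemma part2:
  fixes J :: "'n::finite almost_cx"
  assumes dJ: "J differentiable (at x)"
  shows "JG Gam J x p Z = Jc J x p Z + gamma_op (S_tensor Gam J x) p Z"
proof -
  obtain a \<alpha> where Z: "Z = (a, \<alpha>)" by fastforce
  define D where "D = frechet_derivative J (at x)"
  have lD: "linear D" unfolding D_def
    using dJ frechet_derivative_works has_derivative_linear by blast
  have g: "snd (gamma_op (S_tensor Gam J x) p Z) $ j =
      (\<Sum>i\<in>UNIV. (\<Sum>k\<in>UNIV. p $ k * D (e j) $ k $ i) * a $ i)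
    - (\<Sum>i\<in>UNIV. (\<Sum>k\<in>UNIV. p $ k * D (e i) $ k $ j) * a $ i)
    + (\<Sum>i\<in>UNIV. (\<Sum>l\<in>UNIV. Gp Gam x p l j * J x $ l $ i) * a $ i)
    - (\<Sum>i\<in>UNIV. (\<Sum>l\<in>UNIV. Gp Gam x p i l * J x $ l $ j) * a $ i)" for j
  proof -
    have "snd (gamma_op (S_tensor Gam J x) p Z) $ j = (\<Sum>i\<in>UNIV. (\<Sum>k\<in>UNIV.
       p $ k * D (e j) $ k $ i - p $ k * D (e i) $ k $ j + p $ k * chr Gam x (J x *v e i) (e j) $ k
        - p $ k * chr Gam x (e i) (J x *v e j) $ k) * a $ i)"
      by (simp add: gamma_op_def Z S_eq[OF dJ] D_def[symmetric] algebra_simps sum_distrib_left sum.distrib sum_subtractf)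
         (simp add: e_def axis_def mult_delta_right mult_delta_left matrix_vector_mult_def)
    also have "\<dots> = (\<Sum>i\<in>UNIV. (\<Sum>k\<in>UNIV. p $ k * D (e j) $ k $ i) * a $ i)
    - (\<Sum>i\<in>UNIV. (\<Sum>k\<in>UNIV. p $ k * D (e i) $ k $ j) * a $ i)
    + (\<Sum>i\<in>UNIV. (\<Sum>l\<in>UNIV. Gp Gam x p l j * J x $ l $ i) * a $ i)
    - (\<Sum>i\<in>UNIV. (\<Sum>l\<in>UNIV. Gp Gam x p i l * J x $ l $ j) * a $ i)"
      by (simp add: sum.distrib sum_subtractf chr_e chr_e2 left_diff_distrib distrib_right Gv_def)
         (simp add: e_def axis_def mult_delta_right mult_delta_left matrix_vector_mult_def mult_ac)
    finally show ?thesis .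
  qed
  have c: "snd (Jc J x p Z) $ j = (\<Sum>i\<in>UNIV. (\<Sum>k\<in>UNIV. p $ k * D (e i) $ k $ j) * a $ i)
     + (transpose (J x) *v \<alpha>) $ j - (\<Sum>i\<in>UNIV. (\<Sum>k\<in>UNIV. p $ k * D (e j) $ k $ i) * a $ i)" for j
  proof -
    have "(\<Sum>k\<in>UNIV. p $ k * D a $ k $ j) = (\<Sum>i\<in>UNIV. (\<Sum>k\<in>UNIV. p $ k * D (e i) $ k $ j) * a $ i)"
    proof -
      have "(\<Sum>k\<in>UNIV. p $ k * D a $ k $ j) = (\<Sum>k\<in>UNIV. \<Sum>i\<in>UNIV. p $ k * D (e i) $ k $ j * a $ i)"
        by (simp add: D_expand[OF lD, of a] sum_distrib_left mult_ac)
      also have "\<dots> = (\<Sum>i\<in>UNIV. \<Sum>k\<in>UNIV. p $ k * D (e i) $ k $ j * a $ i)" by (rule sum.swap)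
      finally show ?thesis by (simp add: sum_distrib_right)
    qed
    moreover have "(\<Sum>l\<in>UNIV. \<Sum>k\<in>UNIV. p $ k * D (e j) $ k $ l * a $ l) = 
       (\<Sum>i\<in>UNIV. (\<Sum>k\<in>UNIV. p $ k * D (e j) $ k $ i) * a $ i)"
      by (simp add: sum_distrib_right)
    ultimately show ?thesis
      using lD by (simp add: Jc_eq D_def Jcv_def Z del: transpose_matrix_vector)
  qed
  have "snd (JG Gam J x p Z) = snd (Jc J x p Z + gamma_op (S_tensor Gam J x) p Z)"
    unfolding vec_eq_iff
  proof
    fix j
    show "snd (JG Gam J x p Z) $ j = snd (Jc J x p Z + gamma_op (S_tensor Gam J x) p Z) $ j"
      using c[of j] g[of j]
      by (simp add: part1 Z sum_subtractf left_diff_distrib del: transpose_matrix_vector)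
  qed
  moreover have "fst (JG Gam J x p Z) = fst (Jc J x p Z + gamma_op (S_tensor Gam J x) p Z)"
    using lD by (simp add: part1 Z Jc_eq D_def Jcv_def gamma_op_def)
  ultimately show ?thesis by (simp add: prod_eq_iff)
qed

theorem proposition2p6:
  fixes J :: "'n::finite almost_cx" and Gam :: "'n christoffel"
    and U :: "(real^'n) set" and x p :: "real^'n"
  assumes "open U" and "x \<in> U"
    and "\<forall>y\<in>U. J y ** J y = - mat 1"
    and "\<forall>y\<in>U. J differentiable (at y)"
  shows "(\<forall>a \<alpha>. JG Gam J x p (a, \<alpha>) =
            (J x *v a,
             (\<chi> i. \<Sum>j\<in>UNIV. (\<Sum>l\<in>UNIV. Gp Gam x p l i * J x $ l $ j - Gp Gam x p j l * J x $ l $ i) * a $ j)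
             + transpose (J x) *v \<alpha>))
       \<and> (\<forall>Z. JG Gam J x p Z = Jc J x p Z + gamma_op (S_tensor Gam J x) p Z)"
  using part1 part2 assms(2,4) by blast

end
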